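(* Let $P$ be a non-constant polynomial with complex coefficients such that $P(0)=0$. Then the map $\widehat P:C^\infty(\mathbb{R},\mathbb{C})\to C^\infty(\mathbb{R},\mathbb{C})$, $f\mapsto P(f)=P\circ f$, has dense range.
   Context: $C^\infty(\mathbb{R},\mathbb{C})$ is the Fréchet space of complex-valued smooth functions on $\mathbb{R}$ with seminorms $p_k(f)=\max_{0\le j\le k}\max_{t\in[-k,k]}|f^{(j)}(t)|$, $k\in\mathbb{N}$. *)

theory Defs
  imports "HOL-Analysis.Analysis" "HOL-Computational_Algebra.Polynomial"
begin

fun nth_deriv :: "nat \<Rightarrow> (real \<Rightarrow> complex) \<Rightarrow> real \<Rightarrow> complex" where
  "nth_deriv 0 f = f"
| "nth_deriv (Suc n) f = (\<lambda>t. vector_derivative (nth_deriv n f) (at t))"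

definition smooth_fun :: "(real \<Rightarrow> complex) \<Rightarrow> bool" where
  "smooth_fun f \<longleftrightarrow> (\<forall>n t. nth_deriv n f differentiable (at t))"

definition seminorm_p :: "nat \<Rightarrow> (real \<Rightarrow> complex) \<Rightarrow> real" where
  "seminorm_p k f = (SUP j\<in>{..k}. SUP t\<in>{- real k..real k}. norm (nth_deriv j f t))"

end

theory Submission
  imports Defs "HOL-Complex_Analysis.Complex_Analysis" "HOL-Computational_Algebra.Fundamental_Theorem_Algebra"
begin


fun Sn :: "nat \<Rightarrow> (real \<Rightarrow> complex) \<Rightarrow> bool" where
  "Sn 0 f = (\<forall>t. f differentiable (at t))"
| "Sn (Suc n) f = ((\<forall>t. f differentiable (at t)) \<and> Sn n (\<lambda>t. vector_derivative f (at t)))"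

lemma nth_deriv_Suc': "nth_deriv (Suc n) f = nth_deriv n (\<lambda>t. vector_derivative f (at t))"
  by (induction n) auto

lemma Sn_iff: "Sn n f \<longleftrightarrow> (\<forall>m\<le>n. \<forall>t. nth_deriv m f differentiable (at t))"
proof (induction n arbitrary: f)
  case 0
  then show ?case by auto
next
  case (Suc n)
  have "(\<forall>m\<le>Suc n. \<forall>t. nth_deriv m f differentiable (at t)) \<longleftrightarrow>
        (\<forall>t. f differentiable (at t)) \<and> (\<forall>m\<le>n. \<forall>t. nth_deriv (Suc m) f differentiable (at t))"
    by (metis Suc_le_mono le0 nth_deriv.simps(1) not0_implies_Suc)
  then show ?case using Suc by (simp only: Sn.simps nth_deriv_Suc')
qed

lemma smooth_iff: "smooth_fun f \<longleftrightarrow> (\<forall>n. Sn n f)"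
  unfolding smooth_fun_def Sn_iff by blast

lemma Sn_SucI:
  assumes "\<And>t. (f has_vector_derivative d t) (at t)" "Sn n d"
  shows "Sn (Suc n) f"
proof -
  have "(\<lambda>t. vector_derivative f (at t)) = d"
    using assms(1) vector_derivative_at by blast
  moreover have "\<forall>t. f differentiable (at t)"
    using assms(1) differentiableI_vector by blast
  ultimately show ?thesis using assms(2) by simp
qed

lemma Sn_SucD:
  assumes "Sn (Suc n) f"
  obtains d where "\<And>t. (f has_vector_derivative d t) (at t)" "Sn n d"
proof -
  show ?thesis
    using assms by (intro that[of "\<lambda>t. vector_derivative f (at t)"]) (auto simp: vector_derivative_works[symmetric])
qed

lemma Sn_mono: "Sn (Suc n) f \<Longrightarrow> Sn n f"
proof (induction n arbitrary: f)
  case 0 then show ?case by simp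
next
  case (Suc n)
  show ?case by (metis Sn.simps(2) Suc.IH Suc.prems)
qed

lemma Sn_diff: "Sn n f \<Longrightarrow> (f has_vector_derivative vector_derivative f (at t)) (at t)"
  by (cases n) (auto simp: vector_derivative_works[symmetric])

lemma Sn_add: "Sn n a \<Longrightarrow> Sn n b \<Longrightarrow> Sn n (\<lambda>t. a t + b t)"
proof (induction n arbitrary: a b)
  case 0 then show ?case by auto
next
  case (Suc n)
  obtain da where da: "\<And>t. (a has_vector_derivative da t) (at t)" "Sn n da" using Suc.prems(1) Sn_SucD by blast
  obtain db where db: "\<And>t. (b has_vector_derivative db t) (at t)" "Sn n db" using Suc.prems(2) Sn_SucD by blast
  show ?case
    by (rule Sn_SucI[where d="\<lambda>t. da t + db t"]) (simp_all add: has_vector_derivative_add da db Suc.IH)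
qed

lemma Sn_mult: "Sn n a \<Longrightarrow> Sn n b \<Longrightarrow> Sn n (\<lambda>t. a t * b t)"
proof (induction n arbitrary: a b)
  case 0 then show ?case by auto
next
  case (Suc n)
  obtain da where da: "\<And>t. (a has_vector_derivative da t) (at t)" "Sn n da" using Suc.prems(1) Sn_SucD by blast
  obtain db where db: "\<And>t. (b has_vector_derivative db t) (at t)" "Sn n db" using Suc.prems(2) Sn_SucD by blast
  have a: "Sn n a" and b: "Sn n b" using Suc.prems Sn_mono by blast+
  show ?case
    by (rule Sn_SucI[where d="\<lambda>t. a t * db t + da t * b t"])
       (simp_all add: has_vector_derivative_mult da db Suc.IH Sn_add a b)
qed

lemma Sn_comp:
  assumes "open U"
  shows "F holomorphic_on U \<Longrightarrow> Sn n u \<Longrightarrow> (\<And>t. u t \<in> U) \<Longrightarrow> Sn n (\<lambda>t. F (u t))"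
proof (induction n arbitrary: F u)
  case 0
  have "((F \<circ> u) has_vector_derivative (vector_derivative u (at t) * deriv F (u t))) (at t)" for t
    by (rule field_vector_diff_chain_at[OF Sn_diff[OF 0(2)]])
       (meson "0.prems"(1,3) DERIV_deriv_iff_field_differentiable assms holomorphic_on_imp_differentiable_at)
  then show ?case unfolding o_def Sn.simps using differentiableI_vector by blast
next
  case (Suc n)
  obtain du where du: "\<And>t. (u has_vector_derivative du t) (at t)" "Sn n du" using Suc.prems(2) Sn_SucD by blast
  have hd: "deriv F holomorphic_on U" using Suc.prems(1) assms holomorphic_deriv by blast
  have "((F \<circ> u) has_vector_derivative (du t * deriv F (u t))) (at t)" for t
    by (rule field_vector_diff_chain_at[OF du(1)])
       (meson Suc.prems(1,3) DERIV_deriv_iff_field_differentiable assms holomorphic_on_imp_differentiable_at)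
  moreover have "Sn n (\<lambda>t. du t * deriv F (u t))"
    using Sn_mult[OF du(2) Suc.IH[OF hd Sn_mono[OF Suc.prems(2)] Suc.prems(3)]] .
  ultimately show ?case
    by (intro Sn_SucI[where d="\<lambda>t. du t * deriv F (u t)"]) (simp_all add: o_def)
qed



lemma poly_holo: "poly p holomorphic_on S"
  by (meson field_differentiable_at_within field_differentiable_def holomorphic_on_def poly_DERIV)

lemma deriv_poly: "deriv (poly p) z = poly (pderiv p) z"
  by (rule DERIV_imp_deriv[OF poly_DERIV])

lemma lift_deriv:
  fixes P :: "complex poly"
  assumes hd: "h differentiable (at t)" and cf: "continuous_on UNIV f"
    and eq: "\<And>t. poly P (f t) = h t" and nz: "poly (pderiv P) (f t) \<noteq> 0"
  shows "(f has_vector_derivative (vector_derivative h (at t) * inverse (poly (pderiv P) (f t)))) (at t)"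
proof -
  define z0 where "z0 = f t"
  obtain r where r: "r > 0" "inj_on (poly P) (ball z0 r)"
    using has_complex_derivative_locally_injective[OF poly_holo[of P UNIV], of z0] nz
    by (metis deriv_poly open_UNIV UNIV_I z0_def)
  obtain Q where Qh: "Q holomorphic_on (poly P ` ball z0 r)"
    and Qd: "\<And>z. z \<in> ball z0 r \<Longrightarrow> deriv (poly P) z * deriv Q (poly P z) = 1"
    and Qi: "\<And>z. z \<in> ball z0 r \<Longrightarrow> Q (poly P z) = z"
    using holomorphic_has_inverse[OF poly_holo open_ball r(2)] by blast
  have opn: "open (poly P ` ball z0 r)"
    using open_mapping_thm3[OF poly_holo open_ball r(2)] .
  have z0in: "z0 \<in> ball z0 r" using r by simp
  have htin: "h t \<in> poly P ` ball z0 r" using z0in eq z0_def by (metis imageI)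
  obtain d where d: "d > 0" "\<And>s. dist s t < d \<Longrightarrow> dist (f s) z0 < r"
    using cf r(1) unfolding continuous_on_iff z0_def by (metis UNIV_I)
  have dQ: "(Q has_field_derivative deriv Q (h t)) (at (h t))"
    using DERIV_deriv_iff_field_differentiable Qh htin holomorphic_on_imp_differentiable_at opn by blast
  have "((Q \<circ> h) has_vector_derivative (vector_derivative h (at t) * deriv Q (h t))) (at t)"
    using field_vector_diff_chain_at[OF hd[unfolded vector_derivative_works] dQ] .
  moreover have "deriv Q (h t) = inverse (poly (pderiv P) (f t))"
    using Qd[OF z0in] by (metis deriv_poly eq z0_def inverse_unique mult.commute)
  moreover have "(Q \<circ> h) s = f s" if "s \<in> ball t d" for s
  proof -
    have "f s \<in> ball z0 r" using d(2)[of s] that by (simp add: dist_commute)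
    then show ?thesis using Qi eq by (metis comp_apply)
  qed
  ultimately show ?thesis
    using has_vector_derivative_transform_within_open[of "Q \<circ> h" _ t "ball t d" f] d(1) by auto
qed

lemma lift_smooth:
  fixes P :: "complex poly"
  assumes hs: "smooth_fun h" and cf: "continuous_on UNIV f"
    and eq: "\<And>t. poly P (f t) = h t" and nz: "\<And>t. poly (pderiv P) (f t) \<noteq> 0"
  shows "smooth_fun f"
proof -
  have hS: "\<And>n. Sn n h" using hs smooth_iff by blast
  have hd: "\<And>t. h differentiable (at t)" using hS[of 0] by simp
  have hS': "\<And>n. Sn n (\<lambda>t. vector_derivative h (at t))" using hS by (metis Sn.simps(2))
  note D = lift_deriv[OF hd cf eq nz]
  have opU: "open {z. poly (pderiv P) z \<noteq> 0}"
    by (intro open_Collect_neq continuous_intros) (auto intro: holomorphic_on_imp_continuous_on poly_holo)?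
  have hol: "(\<lambda>z. inverse (poly (pderiv P) z)) holomorphic_on {z. poly (pderiv P) z \<noteq> 0}"
    by (intro holomorphic_intros poly_holo) auto?
  have "Sn n f" for n
  proof (induction n)
    case 0 then show ?case using D differentiableI_vector by auto
  next
    case (Suc n)
    have "Sn n (\<lambda>t. inverse (poly (pderiv P) (f t)))"
      using Sn_comp[OF opU hol Suc.IH] nz by blast
    then have "Sn n (\<lambda>t. vector_derivative h (at t) * inverse (poly (pderiv P) (f t)))"
      using Sn_mult hS' by blast
    then show ?case by (rule Sn_SucI[OF D])
  qed
  then show ?thesis using smooth_iff by blast
qed



lemma poly_cont: "continuous_on S (poly (p::complex poly))"
  using holomorphic_on_imp_continuous_on poly_holo by blast

lemma nonconst_shift:
  fixes P :: "complex poly"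
  assumes "degree P > 0"
  shows "degree (P - [:w:]) > 0"
proof (rule ccontr)
  assume "\<not> ?thesis"
  then have "degree (P - [:w:]) = 0" by simp
  moreover have "P = (P - [:w:]) + [:w:]" by simp
  ultimately have "degree P \<le> max 0 0"
    using degree_add_le_max[of "P - [:w:]" "[:w:]"] by simp
  then show False using assms by simp
qed

lemma poly_surj:
  fixes P :: "complex poly"
  assumes "degree P > 0"
  shows "\<exists>z. poly P z = w"
proof -
  have "\<not> constant (poly (P - [:w:]))"
    using nonconst_shift[OF assms] constant_degree by (metis less_irrefl)
  then obtain z where "poly (P - [:w:]) z = 0" using fundamental_theorem_of_algebra by blast
  then show ?thesis by auto
qed

lemma fiber_finite:
  fixes P :: "complex poly"
  assumes "degree P > 0"
  shows "finite {z. poly P z = w}"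
proof -
  have "P - [:w:] \<noteq> 0" using nonconst_shift[OF assms, of w] by auto
  then have "finite {z. poly (P - [:w:]) z = 0}" by (rule poly_roots_finite)
  then show ?thesis by simp
qed

lemma finite_small:
  assumes "finite A" "\<And>a. a \<in> A \<Longrightarrow> \<exists>r>0. \<forall>r'. 0 < r' \<and> r' \<le> r \<longrightarrow> Q a r'"
  shows "\<exists>r>(0::real). \<forall>r'. 0 < r' \<and> r' \<le> r \<longrightarrow> (\<forall>a\<in>A. Q a r')"
  using assms
proof (induction A rule: finite_induct)
  case empty
  then show ?case by (intro exI[of _ 1]) auto
next
  case (insert x F)
  obtain r1 where r1: "r1 > 0" "\<forall>r'. 0 < r' \<and> r' \<le> r1 \<longrightarrow> (\<forall>a\<in>F. Q a r')"
    using insert by auto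
  have "\<exists>r>0. \<forall>r'. 0 < r' \<and> r' \<le> r \<longrightarrow> Q x r'" using insert.prems by simp
  then obtain r2 where r2: "r2 > 0" "\<forall>r'. 0 < r' \<and> r' \<le> r2 \<longrightarrow> Q x r'"
    by blast
  show ?case
    using r1 r2 by (intro exI[of _ "min r1 r2"]) auto
qed

lemma proper_poly:
  fixes P :: "complex poly"
  assumes "degree P > 0" "r > 0"
  shows "\<exists>\<delta>>0. \<forall>x. dist (poly P x) w < \<delta> \<longrightarrow> (\<exists>z. poly P z = w \<and> dist z x < r)"
proof -
  define p where "p = P - [:w:]"
  have dp: "degree p > 0" using nonconst_shift[OF assms(1)] p_def by blast
  obtain a q where pq: "p = pCons a q" by (rule pCons_cases)
  have "q \<noteq> 0" using dp pq by auto
  then obtain R where R: "\<And>x. R \<le> norm x \<Longrightarrow> 1 \<le> norm (poly p x)"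
    using poly_infinity[of q 1 a] pq by blast
  define F where "F = {x. \<forall>z. poly P z = w \<longrightarrow> r \<le> dist z x} \<inter> cball 0 R"
  have "closed {x. \<forall>z. poly P z = w \<longrightarrow> r \<le> dist z x}"
    unfolding Collect_all_eq
  proof (intro closed_INT ballI)
    fix z
    show "closed {x. poly P z = w \<longrightarrow> r \<le> dist z x}"
    proof (cases "poly P z = w")
      case True
      have "{x. poly P z = w \<longrightarrow> r \<le> dist z x} = - ball z r" using True by auto
      then show ?thesis by (simp add: closed_Compl)
    qed simp
  qed
  then have cF: "compact F" unfolding F_def by (intro closed_Int_compact) auto
  have pos: "0 < norm (poly p x)" if "x \<in> F" for x
  proof -
    have "poly P x \<noteq> w" using that assms(2) unfolding F_def by force
    then show ?thesis by (simp add: p_def)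
  qed
  show ?thesis
  proof (cases "F = {}")
    case True
    show ?thesis
    proof (rule exI[of _ 1], intro conjI allI impI)
      fix x assume x: "dist (poly P x) w < 1"
      have "norm (poly p x) < 1" using x by (simp add: p_def dist_norm)
      then have "\<not> R \<le> norm x" using R[of x] by linarith
      then have "x \<in> cball 0 R" by (simp add: dist_norm)
      then show "\<exists>z. poly P z = w \<and> dist z x < r" using True unfolding F_def by force
    qed simp
  next
    case False
    have "continuous_on F (\<lambda>x. norm (poly p x))"
      by (intro continuous_intros poly_cont)
    then obtain x0 where x0: "x0 \<in> F" "\<And>x. x \<in> F \<Longrightarrow> norm (poly p x0) \<le> norm (poly p x)"
      using continuous_attains_inf[OF cF False] by blast
    define m where "m = min 1 (norm (poly p x0))"
    have m: "m > 0" using pos[OF x0(1)] m_def by simp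
    show ?thesis
    proof (rule exI[of _ m], intro conjI allI impI m)
      fix x assume x: "dist (poly P x) w < m"
      have nx: "norm (poly p x) < m" using x by (simp add: p_def dist_norm)
      then have "\<not> R \<le> norm x" using R[of x] m_def by linarith
      then have "x \<in> cball 0 R" by (simp add: dist_norm)
      moreover have "x \<notin> F" using x0(2) nx m_def by force
      ultimately show "\<exists>z. poly P z = w \<and> dist z x < r" unfolding F_def by force
    qed
  qed
qed



lemma poly_covering:
  fixes P :: "complex poly" and K :: "complex set"
  assumes dP: "degree P > 0" and fK: "finite K"
    and crit: "\<And>z. poly (pderiv P) z = 0 \<Longrightarrow> poly P z \<in> K"
  shows "covering_space {z. poly P z \<notin> K} (poly P) (-K)"
proof (rule covering_spaceI)
  let ?C = "{z. poly P z \<notin> K}"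
  show "continuous_on ?C (poly P)" by (rule poly_cont)
  show "poly P ` ?C = -K"
  proof
    show "- K \<subseteq> poly P ` ?C"
    proof
      fix y assume "y \<in> -K"
      moreover obtain z where "poly P z = y" using poly_surj[OF dP] by blast
      ultimately show "y \<in> poly P ` ?C" by force
    qed
  qed auto
  fix w assume w: "w \<in> -K"
  define Z where "Z = {z. poly P z = w}"
  have fZ: "finite Z" using fiber_finite[OF dP] Z_def by simp
  have nz: "\<And>z. z \<in> Z \<Longrightarrow> poly (pderiv P) z \<noteq> 0" using crit w Z_def by auto
  have "\<exists>r>0. \<forall>r'. 0 < r' \<and> r' \<le> r \<longrightarrow> (\<forall>z\<in>Z. inj_on (poly P) (ball z r'))"
  proof (rule finite_small[OF fZ])
    fix z assume "z \<in> Z"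
    then obtain r where r: "r > 0" "inj_on (poly P) (ball z r)"
      using has_complex_derivative_locally_injective[OF poly_holo[of P UNIV], of z] nz
      by (metis deriv_poly open_UNIV UNIV_I)
    show "\<exists>r>0. \<forall>r'. 0 < r' \<and> r' \<le> r \<longrightarrow> inj_on (poly P) (ball z r')"
      using r by (intro exI[of _ r]) (auto intro: inj_on_subset)
  qed
  then obtain r1 where r1: "r1 > 0" "\<forall>r'. 0 < r' \<and> r' \<le> r1 \<longrightarrow> (\<forall>z\<in>Z. inj_on (poly P) (ball z r'))"
    by blast
  have "\<exists>r>0. \<forall>r'. 0 < r' \<and> r' \<le> r \<longrightarrow> (\<forall>zz\<in>Z\<times>Z. fst zz \<noteq> snd zz \<longrightarrow> 2 * r' \<le> dist (fst zz) (snd zz))"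
  proof (rule finite_small)
    show "finite (Z \<times> Z)" using fZ by simp
    fix zz :: "complex \<times> complex"
    show "\<exists>r>0. \<forall>r'. 0 < r' \<and> r' \<le> r \<longrightarrow> fst zz \<noteq> snd zz \<longrightarrow> 2 * r' \<le> dist (fst zz) (snd zz)"
    proof (cases "fst zz = snd zz")
      case True then show ?thesis by (intro exI[of _ 1]) auto
    next
      case False then show ?thesis by (intro exI[of _ "dist (fst zz) (snd zz) / 2"]) auto
    qed
  qed
  then obtain r2 where r2: "r2 > 0" "\<forall>r'. 0 < r' \<and> r' \<le> r2 \<longrightarrow> (\<forall>zz\<in>Z\<times>Z. fst zz \<noteq> snd zz \<longrightarrow> 2 * r' \<le> dist (fst zz) (snd zz))"
    by blast
  define r where "r = min r1 r2"
  have r: "r > 0" using r1 r2 r_def by simp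
  have inj: "\<And>z. z \<in> Z \<Longrightarrow> inj_on (poly P) (ball z r)" using r1 r r_def by simp
  have sep: "\<And>z1 z2. z1 \<in> Z \<Longrightarrow> z2 \<in> Z \<Longrightarrow> z1 \<noteq> z2 \<Longrightarrow> 2 * r \<le> dist z1 z2"
    using r2 r r_def by force
  obtain \<delta> where \<delta>: "\<delta> > 0" "\<And>x. dist (poly P x) w < \<delta> \<Longrightarrow> \<exists>z. poly P z = w \<and> dist z x < r"
    using proper_poly[OF dP r, of w] by blast
  obtain e where e: "e > 0" "\<forall>y\<in>ball w e. y \<noteq> w \<longrightarrow> y \<notin> K"
    using finite_ball_avoid[OF open_UNIV fK UNIV_I, of w] by auto
  have "\<forall>z\<in>Z. \<exists>Q. Q holomorphic_on (poly P ` ball z r) \<and> (\<forall>x\<in>ball z r. Q (poly P x) = x)"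
  proof
    fix z assume "z \<in> Z"
    then obtain Q where "Q holomorphic_on (poly P ` ball z r)" "\<And>x. x \<in> ball z r \<Longrightarrow> Q (poly P x) = x"
      using holomorphic_has_inverse[OF poly_holo open_ball inj] by metis
    then show "\<exists>Q. Q holomorphic_on (poly P ` ball z r) \<and> (\<forall>x\<in>ball z r. Q (poly P x) = x)" by blast
  qed
  then obtain Qf where Qh: "\<And>z. z \<in> Z \<Longrightarrow> Qf z holomorphic_on (poly P ` ball z r)"
    and Qi: "\<And>z x. z \<in> Z \<Longrightarrow> x \<in> ball z r \<Longrightarrow> Qf z (poly P x) = x"
    by metis
  define T where "T = ball w (min \<delta> e) \<inter> (\<Inter>z\<in>Z. poly P ` ball z r)"
  have openT: "open T" unfolding T_def
    using open_mapping_thm3[OF poly_holo open_ball inj] fZ by (intro open_Int open_INT) auto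
  have wT: "w \<in> T" unfolding T_def using \<delta> e r Z_def by force
  have TK: "T \<subseteq> -K" unfolding T_def using e w by force
  have TZ: "\<And>z. z \<in> Z \<Longrightarrow> T \<subseteq> poly P ` ball z r" unfolding T_def by blast
  have Td: "\<And>y. y \<in> T \<Longrightarrow> dist y w < \<delta>" unfolding T_def by (simp add: dist_commute)
  define v where "v = (\<lambda>z. ball z r \<inter> poly P -` T) ` Z"
  show "\<exists>T. w \<in> T \<and> openin (top_of_set (-K)) T \<and>
             (\<exists>v. \<Union>v = ?C \<inter> poly P -` T \<and> (\<forall>u\<in>v. openin (top_of_set ?C) u) \<and>
                  pairwise disjnt v \<and> (\<forall>u\<in>v. \<exists>q. homeomorphism u T (poly P) q))"
  proof (intro exI[of _ T] conjI exI[of _ v])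
    show "w \<in> T" by (rule wT)
    show "openin (top_of_set (-K)) T" using openT TK by (simp add: open_subset)
    show "\<Union>v = ?C \<inter> poly P -` T"
    proof
      show "\<Union>v \<subseteq> ?C \<inter> poly P -` T" unfolding v_def using TK by auto
      show "?C \<inter> poly P -` T \<subseteq> \<Union>v"
      proof
        fix x assume "x \<in> ?C \<inter> poly P -` T"
        then have xT: "poly P x \<in> T" by simp
        then obtain z where "poly P z = w" "dist z x < r" using \<delta>(2) Td by blast
        then show "x \<in> \<Union>v" unfolding v_def Z_def using xT by auto
      qed
    qed
    show "\<forall>u\<in>v. openin (top_of_set ?C) u"
    proof
      fix u assume "u \<in> v"
      then obtain z where u: "u = ball z r \<inter> poly P -` T" unfolding v_def by blast
      have "open u" unfolding u using openT by (intro open_Int open_ball open_vimage poly_cont)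
      moreover have "u \<subseteq> ?C" unfolding u using TK by auto
      ultimately show "openin (top_of_set ?C) u" by (simp add: open_subset)
    qed
    show "pairwise disjnt v"
      unfolding pairwise_def v_def disjnt_def
    proof (intro ballI impI)
      fix u1 u2 assume u1: "u1 \<in> (\<lambda>z. ball z r \<inter> poly P -` T) ` Z" and u2: "u2 \<in> (\<lambda>z. ball z r \<inter> poly P -` T) ` Z"
        and ne: "u1 \<noteq> u2"
      obtain z1 where z1: "z1 \<in> Z" "u1 = ball z1 r \<inter> poly P -` T" using u1 by blast
      obtain z2 where z2: "z2 \<in> Z" "u2 = ball z2 r \<inter> poly P -` T" using u2 by blast
      have "z1 \<noteq> z2" using ne z1 z2 by blast
      then have s: "2 * r \<le> dist z1 z2" using sep z1 z2 by blast
      show "u1 \<inter> u2 = {}"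
      proof (rule ccontr)
        assume "u1 \<inter> u2 \<noteq> {}"
        then obtain x where "x \<in> ball z1 r" "x \<in> ball z2 r" using z1 z2 by blast
        then have "dist z1 z2 < 2 * r" using dist_triangle_less_add[of z1 x r z2 r] by (simp add: dist_commute)
        then show False using s by simp
      qed
    qed
    show "\<forall>u\<in>v. \<exists>q. homeomorphism u T (poly P) q"
    proof
      fix u assume "u \<in> v"
      then obtain z where z: "z \<in> Z" and u: "u = ball z r \<inter> poly P -` T" unfolding v_def by blast
      show "\<exists>q. homeomorphism u T (poly P) q"
      proof (intro exI[of _ "Qf z"])
        have img: "poly P ` u = T"
        proof
          show "poly P ` u \<subseteq> T" unfolding u by auto
          show "T \<subseteq> poly P ` u"
          proof
            fix y assume y: "y \<in> T"
            then obtain x where "x \<in> ball z r" "y = poly P x" using TZ[OF z] by blast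
            then show "y \<in> poly P ` u" unfolding u using y by blast
          qed
        qed
        have img2: "Qf z ` T = u"
        proof
          show "Qf z ` T \<subseteq> u"
          proof
            fix x assume "x \<in> Qf z ` T"
            then obtain y where y: "y \<in> T" "x = Qf z y" by blast
            then obtain x' where "x' \<in> u" "y = poly P x'" using img by blast
            then show "x \<in> u" using y Qi[OF z] unfolding u by auto
          qed
          show "u \<subseteq> Qf z ` T"
          proof
            fix x assume "x \<in> u"
            then have "x = Qf z (poly P x)" "poly P x \<in> T" using Qi[OF z] unfolding u by auto
            then show "x \<in> Qf z ` T" by blast
          qed
        qed
        show "homeomorphism u T (poly P) (Qf z)"
          unfolding homeomorphism_def
        proof (intro conjI ballI)
          show "\<And>x. x \<in> u \<Longrightarrow> Qf z (poly P x) = x" using Qi[OF z] unfolding u by auto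
          show "poly P ` u = T" by (rule img)
          show "continuous_on u (poly P)" by (rule poly_cont)
          show "\<And>y. y \<in> T \<Longrightarrow> poly P (Qf z y) = y"
          proof -
            fix y assume "y \<in> T"
            then obtain x where "x \<in> u" "y = poly P x" using img by blast
            then show "poly P (Qf z y) = y" using Qi[OF z] unfolding u by auto
          qed
          show "Qf z ` T = u" by (rule img2)
          show "continuous_on T (Qf z)"
            using holomorphic_on_imp_continuous_on[OF Qh[OF z]] TZ[OF z] continuous_on_subset by blast
        qed
      qed
    qed
  qed
qed



lemma Sn_const: "Sn n (\<lambda>t. c)"
proof (induction n arbitrary: c)
  case 0 then show ?case by simp
next
  case (Suc n)
  show ?case by (rule Sn_SucI[where d="\<lambda>t. 0"]) (auto intro: derivative_eq_intros Suc.IH)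
qed

lemma nth_deriv_const: "nth_deriv j (\<lambda>t. c) = (\<lambda>t. if j = 0 then c else 0)"
proof (induction j)
  case 0 then show ?case by simp
next
  case (Suc j)
  show ?case using Suc by (simp add: vector_derivative_const_at)
qed

lemma seminorm_const: "seminorm_p k (\<lambda>t. c) = norm c"
proof -
  have inner: "(SUP t\<in>{- real k..real k}. norm (nth_deriv j (\<lambda>t. c) t)) = (if j = 0 then norm c else 0)" for j
  proof -
    have ne: "{- real k..real k} \<noteq> {}" by simp
    show ?thesis unfolding nth_deriv_const using cSUP_const[OF ne] by (cases "j = 0") simp_all
  qed
  have "(SUP j\<in>{..k}. (if j = 0 then norm c else 0)) = norm c"
  proof (rule antisym)
    show "(SUP j\<in>{..k}. (if j = 0 then norm c else 0)) \<le> norm c"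
      by (rule cSUP_least) auto
    show "norm c \<le> (SUP j\<in>{..k}. (if j = 0 then norm c else 0))"
      using cSUP_upper[of 0 "{..k}" "\<lambda>j. if j = 0 then norm c else 0"] by simp
  qed
  then show ?thesis unfolding seminorm_p_def inner by simp
qed

theorem proposition20:
  fixes P :: "complex poly"
  assumes "degree P > 0" and "poly P 0 = 0"
  shows "\<forall>g. smooth_fun g \<longrightarrow> (\<forall>k::nat. \<forall>\<epsilon>>0.
           \<exists>f. smooth_fun f \<and> seminorm_p k (\<lambda>t. poly P (f t) - g t) < \<epsilon>)"
proof (intro allI impI)
  fix g :: "real \<Rightarrow> complex" and k :: nat and \<epsilon> :: real
  assume gs: "smooth_fun g" and \<epsilon>: "\<epsilon> > 0"
  define K where "K = poly P ` {z. poly (pderiv P) z = 0}"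
  have "pderiv P \<noteq> 0" using assms(1) pderiv_eq_0_iff by force
  then have fK: "finite K" unfolding K_def using poly_roots_finite by blast
  have gd: "\<And>t. g differentiable (at t)" using gs smooth_iff Sn.simps(1) by blast
  define N where "N = (\<Union>s\<in>K. (\<lambda>t. s - g t) ` UNIV)"
  have "negligible N" unfolding N_def
  proof (intro negligible_Union finite_imageI fK)
    fix X assume "X \<in> (\<lambda>s. (\<lambda>t. s - g t) ` UNIV) ` K"
    then obtain s where X: "X = (\<lambda>t. s - g t) ` UNIV" by blast
    have "(\<lambda>t. s - g t) differentiable_on UNIV"
      using gd by (intro differentiable_at_imp_differentiable_on) (auto intro: derivative_intros)
    then show "negligible X" unfolding X by (intro negligible_differentiable_image_lowdim) auto
  qed
  moreover have "\<not> negligible (ball (0::complex) \<epsilon>)" by (rule open_not_negligible) (use \<epsilon> in auto)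
  ultimately obtain c where c: "c \<in> ball 0 \<epsilon>" "c \<notin> N" using negligible_subset by blast
  define h where "h = (\<lambda>t. g t + c)"
  have hs: "smooth_fun h" unfolding h_def using gs smooth_iff Sn_add Sn_const by blast
  have hK: "\<And>t. h t \<notin> K"
  proof
    fix t assume "h t \<in> K"
    then have "c \<in> N" unfolding N_def h_def by force
    then show False using c by blast
  qed
  have cont: "continuous_on UNIV h"
    unfolding h_def using gd by (intro continuous_at_imp_continuous_on ballI continuous_intros differentiable_imp_continuous_within) auto
  have cov: "covering_space {z. poly P z \<notin> K} (poly P) (-K)"
    by (rule poly_covering[OF assms(1) fK]) (auto simp: K_def)
  obtain f where f: "continuous_on UNIV f" "f \<in> UNIV \<rightarrow> {z. poly P z \<notin> K}" "\<And>y. y \<in> UNIV \<Longrightarrow> poly P (f y) = h y"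
    using covering_space_lift[OF cov convex_imp_simply_connected[OF convex_UNIV] open_imp_locally_path_connected[OF open_UNIV] cont]
      hK by blast
  have nz: "\<And>t. poly (pderiv P) (f t) \<noteq> 0"
    using f(2) unfolding K_def by blast
  have fs: "smooth_fun f" using lift_smooth[OF hs f(1) _ nz] f(3) by blast
  have "(\<lambda>t. poly P (f t) - g t) = (\<lambda>t. c)" using f(3) unfolding h_def by auto
  then have "seminorm_p k (\<lambda>t. poly P (f t) - g t) = norm c" by (simp add: seminorm_const)
  also have "\<dots> < \<epsilon>" using c by simp
  finally show "\<exists>f. smooth_fun f \<and> seminorm_p k (\<lambda>t. poly P (f t) - g t) < \<epsilon>" using fs by blast
qed

end
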